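(* Let $(A,\mathcal N,\mathcal P,\lambda)$ be a game. Let $A^\perp$ be the event structure with the same events, order and conflict as $A$ but with every polarity reversed. Equip $A^\perp$ with the group $\mathcal N_{A^\perp}:=\mathcal P$ (acting on events as on $A$), the group $\mathcal P_{A^\perp}:=\mathcal N$ (acting on events as on $A$), and the function $\lambda_{A^\perp}:\mathcal P\times\mathcal N\to\mathcal N\times\mathcal P$ defined as the composite $\mathit{isw}\circ\lambda\circ\mathit{isw}$, where $\mathit{isw}$ denotes the invert-and-swap maps $\mathcal P\times\mathcal N\to\mathcal N\times\mathcal P$, $(\beta,\alpha)\mapsto(\alpha^{-1},\beta^{-1})$, and $\mathcal N\times\mathcal P\to\mathcal P\times\mathcal N$, $(\alpha,\beta)\mapsto(\beta^{-1},\alpha^{-1})$. Explicitly, $\lambda_{A^\perp}(\beta,\alpha)=(\alpha'^{-1},\beta'^{-1})$ where $(\beta',\alpha')=\lambda(\alpha^{-1},\beta^{-1})$. Then $(A^\perp,\mathcal P,\mathcal N,\lambda_{A^\perp})$ is a game (the dual of $A$).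
   Context: An event structure (with polarity) is a set $A$ with a partial order $\leq$ such that every element has finitely many elements below it, an irreflexive symmetric relation $\#$ (conflict) that is hereditary (if $a\leq a'$ and $a\# b$ then $a'\# b$), and a polarity function $A\to\{-,+\}$. A configuration is a finite $\leq$-down-closed subset containing no two elements in conflict; $\mathrm{Conf}(A)$ is the set of configurations. For $x,y\in\mathrm{Conf}(A)$, $x\subseteq^+y$ (resp. $x\subseteq^-y$) means $x\subseteq y$ and all elements of $y\setminus x$ are positive (resp. negative). An automorphism of $A$ is a bijection $A\to A$ preserving and reflecting $\leq$, $\#$ and polarity. An automorphism $\alpha$ fixes $x\in\mathrm{Conf}(A)$ if $\alpha(a)=a$ for all $a\in x$. An automorphism $\alpha$ is negative if whenever $\alpha$ fixes $x\in\mathrm{Conf}(A)$ and $x\subseteq^+y\in\mathrm{Conf}(A)$, $\alpha$ fixes $y$; it is positive if the same holds with $\subseteq^-$ in place of $\subseteq^+$. An action of a group $G$ on $A$ is a group homomorphism from $G$ to the automorphism group of $A$ (we write $g(a)$ for the action); it is negative (resp. positive) if every element acts by a negative (resp. positive) automorphism. A game is a tuple $(A,\mathcal N,\mathcal P,\lambda)$ where $A$ is an event structure, $\mathcal N$ is a group with a negative action on $A$, $\mathcal P$ is a group with a positive action on $A$, and $\lambda:\mathcal N\times\mathcal P\to\mathcal P\times\mathcal N$ is a function satisfying, for all $\alpha,\alpha'\in\mathcal N$, $\beta,\beta'\in\mathcal P$ (with $e$ the units): (i) $\lambda(e,\beta)=(\beta,e)$ and $\lambda(\alpha,e)=(e,\alpha)$;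 (ii) if $\lambda(\alpha',\beta)=(\beta_1,\alpha_1)$ and $\lambda(\alpha,\beta_1)=(\beta_2,\alpha_2)$ then $\lambda(\alpha\alpha',\beta)=(\beta_2,\alpha_2\alpha_1)$; (iii) if $\lambda(\alpha,\beta)=(\beta_1,\alpha_1)$ and $\lambda(\alpha_1,\beta')=(\beta_2,\alpha_2)$ then $\lambda(\alpha,\beta\beta')=(\beta_1\beta_2,\alpha_2)$; (iv) if $\lambda(\alpha,\beta)=(\beta',\alpha')$ then $\alpha(\beta(a))=\beta'(\alpha'(a))$ for all $a\in A$. (Conditions (i)–(iii) say $\lambda$ is a distributive law between the monads $\mathcal N\times(-)$ and $\mathcal P\times(-)$ on $\mathbf{Set}$.) *)

theory Defs
  imports "HOL-Algebra.Group"
begin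

text \<open>Event structures with polarity. Polarity: True = positive (+), False = negative (-).\<close>
record 'a evstruct =
  ev  :: "'a set"
  le  :: "'a \<Rightarrow> 'a \<Rightarrow> bool"
  cf  :: "'a \<Rightarrow> 'a \<Rightarrow> bool"
  pol :: "'a \<Rightarrow> bool"

definition event_structure :: "'a evstruct \<Rightarrow> bool" where
  "event_structure E \<longleftrightarrow>
     (\<forall>a b. le E a b \<longrightarrow> a \<in> ev E \<and> b \<in> ev E) \<and>
     (\<forall>a\<in>ev E. le E a a) \<and>
     (\<forall>a b. le E a b \<and> le E b a \<longrightarrow> a = b) \<and>
     (\<forall>a b c. le E a b \<and> le E b c \<longrightarrow> le E a c) \<and>
     (\<forall>a\<in>ev E. finite {b. le E b a}) \<and>
     (\<forall>a b. cf E a b \<longrightarrow> a \<in> ev E \<and> b \<in> ev E) \<and>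
     (\<forall>a. \<not> cf E a a) \<and>
     (\<forall>a b. cf E a b \<longrightarrow> cf E b a) \<and>
     (\<forall>a a' b. le E a a' \<and> cf E a b \<longrightarrow> cf E a' b)"

definition conf :: "'a evstruct \<Rightarrow> 'a set set" where
  "conf E = {x. finite x \<and> x \<subseteq> ev E \<and>
                (\<forall>a\<in>x. \<forall>b. le E b a \<longrightarrow> b \<in> x) \<and>
                (\<forall>a\<in>x. \<forall>b\<in>x. \<not> cf E a b)}"

definition pos_ext :: "'a evstruct \<Rightarrow> 'a set \<Rightarrow> 'a set \<Rightarrow> bool" where
  "pos_ext E x y \<longleftrightarrow> x \<subseteq> y \<and> (\<forall>a\<in>y - x. pol E a)"

definition neg_ext :: "'a evstruct \<Rightarrow> 'a set \<Rightarrow> 'a set \<Rightarrow> bool" where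
  "neg_ext E x y \<longleftrightarrow> x \<subseteq> y \<and> (\<forall>a\<in>y - x. \<not> pol E a)"

definition automorphism :: "'a evstruct \<Rightarrow> ('a \<Rightarrow> 'a) \<Rightarrow> bool" where
  "automorphism E f \<longleftrightarrow> bij_betw f (ev E) (ev E) \<and>
     (\<forall>a\<in>ev E. \<forall>b\<in>ev E. le E (f a) (f b) \<longleftrightarrow> le E a b) \<and>
     (\<forall>a\<in>ev E. \<forall>b\<in>ev E. cf E (f a) (f b) \<longleftrightarrow> cf E a b) \<and>
     (\<forall>a\<in>ev E. pol E (f a) = pol E a)"

definition fixes_conf :: "('a \<Rightarrow> 'a) \<Rightarrow> 'a set \<Rightarrow> bool" where
  "fixes_conf f x \<longleftrightarrow> (\<forall>a\<in>x. f a = a)"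

definition negative_aut :: "'a evstruct \<Rightarrow> ('a \<Rightarrow> 'a) \<Rightarrow> bool" where
  "negative_aut E f \<longleftrightarrow> automorphism E f \<and>
     (\<forall>x\<in>conf E. \<forall>y\<in>conf E. fixes_conf f x \<and> pos_ext E x y \<longrightarrow> fixes_conf f y)"

definition positive_aut :: "'a evstruct \<Rightarrow> ('a \<Rightarrow> 'a) \<Rightarrow> bool" where
  "positive_aut E f \<longleftrightarrow> automorphism E f \<and>
     (\<forall>x\<in>conf E. \<forall>y\<in>conf E. fixes_conf f x \<and> neg_ext E x y \<longrightarrow> fixes_conf f y)"

definition group_action :: "('g, 'm) monoid_scheme \<Rightarrow> 'a evstruct \<Rightarrow> ('g \<Rightarrow> 'a \<Rightarrow> 'a) \<Rightarrow> bool" where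
  "group_action G E act \<longleftrightarrow> group G \<and>
     (\<forall>g\<in>carrier G. automorphism E (act g)) \<and>
     (\<forall>g\<in>carrier G. \<forall>h\<in>carrier G. \<forall>a\<in>ev E. act (g \<otimes>\<^bsub>G\<^esub> h) a = act g (act h a))"

definition negative_action :: "('g, 'm) monoid_scheme \<Rightarrow> 'a evstruct \<Rightarrow> ('g \<Rightarrow> 'a \<Rightarrow> 'a) \<Rightarrow> bool" where
  "negative_action G E act \<longleftrightarrow> group_action G E act \<and> (\<forall>g\<in>carrier G. negative_aut E (act g))"

definition positive_action :: "('g, 'm) monoid_scheme \<Rightarrow> 'a evstruct \<Rightarrow> ('g \<Rightarrow> 'a \<Rightarrow> 'a) \<Rightarrow> bool" where
  "positive_action G E act \<longleftrightarrow> group_action G E act \<and> (\<forall>g\<in>carrier G. positive_aut E (act g))"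

definition game ::
  "'a evstruct \<Rightarrow> ('n, 'm1) monoid_scheme \<Rightarrow> ('n \<Rightarrow> 'a \<Rightarrow> 'a)
     \<Rightarrow> ('p, 'm2) monoid_scheme \<Rightarrow> ('p \<Rightarrow> 'a \<Rightarrow> 'a) \<Rightarrow> ('n \<Rightarrow> 'p \<Rightarrow> 'p \<times> 'n) \<Rightarrow> bool" where
  "game E N actN P actP lam \<longleftrightarrow>
     event_structure E \<and> negative_action N E actN \<and> positive_action P E actP \<and>
     (\<forall>\<alpha>\<in>carrier N. \<forall>\<beta>\<in>carrier P. lam \<alpha> \<beta> \<in> carrier P \<times> carrier N) \<and>
     (\<forall>\<beta>\<in>carrier P. lam \<one>\<^bsub>N\<^esub> \<beta> = (\<beta>, \<one>\<^bsub>N\<^esub>)) \<and>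
     (\<forall>\<alpha>\<in>carrier N. lam \<alpha> \<one>\<^bsub>P\<^esub> = (\<one>\<^bsub>P\<^esub>, \<alpha>)) \<and>
     (\<forall>\<alpha>\<in>carrier N. \<forall>\<alpha>'\<in>carrier N. \<forall>\<beta>\<in>carrier P.
        lam (\<alpha> \<otimes>\<^bsub>N\<^esub> \<alpha>') \<beta> =
          (fst (lam \<alpha> (fst (lam \<alpha>' \<beta>))),
           snd (lam \<alpha> (fst (lam \<alpha>' \<beta>))) \<otimes>\<^bsub>N\<^esub> snd (lam \<alpha>' \<beta>))) \<and>
     (\<forall>\<alpha>\<in>carrier N. \<forall>\<beta>\<in>carrier P. \<forall>\<beta>'\<in>carrier P.
        lam \<alpha> (\<beta> \<otimes>\<^bsub>P\<^esub> \<beta>') =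
          (fst (lam \<alpha> \<beta>) \<otimes>\<^bsub>P\<^esub> fst (lam (snd (lam \<alpha> \<beta>)) \<beta>'),
           snd (lam (snd (lam \<alpha> \<beta>)) \<beta>'))) \<and>
     (\<forall>\<alpha>\<in>carrier N. \<forall>\<beta>\<in>carrier P. \<forall>a\<in>ev E.
        actN \<alpha> (actP \<beta> a) = actP (fst (lam \<alpha> \<beta>)) (actN (snd (lam \<alpha> \<beta>)) a))"

definition dual_es :: "'a evstruct \<Rightarrow> 'a evstruct" where
  "dual_es E = E\<lparr>pol := (\<lambda>a. \<not> pol E a)\<rparr>"

definition dual_lam ::
  "('n, 'm1) monoid_scheme \<Rightarrow> ('p, 'm2) monoid_scheme \<Rightarrow> ('n \<Rightarrow> 'p \<Rightarrow> 'p \<times> 'n) \<Rightarrow> ('p \<Rightarrow> 'n \<Rightarrow> 'n \<times> 'p)" where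
  "dual_lam N P lam = (\<lambda>\<beta> \<alpha>.
     (let r = lam (inv\<^bsub>N\<^esub> \<alpha>) (inv\<^bsub>P\<^esub> \<beta>) in (inv\<^bsub>N\<^esub> (snd r), inv\<^bsub>P\<^esub> (fst r))))"

end

theory Submission
  imports Defs
begin

lemma ga_in:
  assumes "group_action G E act" "g \<in> carrier G" "a \<in> ev E"
  shows "act g a \<in> ev E"
  using assms unfolding group_action_def automorphism_def bij_betw_def by blast

lemma ga_one:
  assumes "group_action G E act" "a \<in> ev E"
  shows "act \<one>\<^bsub>G\<^esub> a = a"
proof -
  have g: "group G" using assms unfolding group_action_def by blast
  have o: "\<one>\<^bsub>G\<^esub> \<in> carrier G" using g by (simp add: group.is_monoid monoid.one_closed)
  have "act (\<one>\<^bsub>G\<^esub> \<otimes>\<^bsub>G\<^esub> \<one>\<^bsub>G\<^esub>) a = act \<one>\<^bsub>G\<^esub> (act \<one>\<^bsub>G\<^esub> a)"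
    using assms o unfolding group_action_def by blast
  hence e: "act \<one>\<^bsub>G\<^esub> a = act \<one>\<^bsub>G\<^esub> (act \<one>\<^bsub>G\<^esub> a)" using g o by (simp add: group.is_monoid monoid.l_one)
  have "inj_on (act \<one>\<^bsub>G\<^esub>) (ev E)" using assms o unfolding group_action_def automorphism_def bij_betw_def by blast
  moreover have "act \<one>\<^bsub>G\<^esub> a \<in> ev E" using ga_in[OF assms(1) o assms(2)] .
  ultimately show ?thesis using e assms(2) by (metis inj_on_def)
qed

lemma ga_cancel:
  assumes "group_action G E act" "g \<in> carrier G" "a \<in> ev E"
  shows "act g (act (inv\<^bsub>G\<^esub> g) a) = a" "act (inv\<^bsub>G\<^esub> g) (act g a) = a"
proof -
  have gr: "group G" using assms unfolding group_action_def by blast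
  have i: "inv\<^bsub>G\<^esub> g \<in> carrier G" using gr assms by simp
  have "act (g \<otimes>\<^bsub>G\<^esub> inv\<^bsub>G\<^esub> g) a = act g (act (inv\<^bsub>G\<^esub> g) a)"
    using assms i unfolding group_action_def by blast
  thus "act g (act (inv\<^bsub>G\<^esub> g) a) = a" using gr assms ga_one[OF assms(1,3)] by (simp add: group.r_inv)
  have "act (inv\<^bsub>G\<^esub> g \<otimes>\<^bsub>G\<^esub> g) a = act (inv\<^bsub>G\<^esub> g) (act g a)"
    using assms i unfolding group_action_def by blast
  thus "act (inv\<^bsub>G\<^esub> g) (act g a) = a" using gr assms ga_one[OF assms(1,3)] by (simp add: group.l_inv)
qed

lemma dual_fields[simp]: "ev (dual_es E) = ev E" "le (dual_es E) = le E" "cf (dual_es E) = cf E"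
  "pol (dual_es E) a = (\<not> pol E a)"
  unfolding dual_es_def by simp_all

lemma dual_conf[simp]: "conf (dual_es E) = conf E"
  unfolding conf_def by simp

lemma dual_aut[simp]: "automorphism (dual_es E) f = automorphism E f"
  unfolding automorphism_def by simp

lemma dual_ga[simp]: "group_action G (dual_es E) act = group_action G E act"
  unfolding group_action_def by simp

lemma dual_neg[simp]: "negative_aut (dual_es E) f = positive_aut E f"
  unfolding negative_aut_def positive_aut_def pos_ext_def neg_ext_def
  by simp

lemma dual_pos[simp]: "positive_aut (dual_es E) f = negative_aut E f"
  unfolding negative_aut_def positive_aut_def pos_ext_def neg_ext_def
  by simp

theorem mainTheorem1:
  fixes E :: "'a evstruct"
    and N :: "('n, 'm1) monoid_scheme" and actN :: "'n \<Rightarrow> 'a \<Rightarrow> 'a"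
    and P :: "('p, 'm2) monoid_scheme" and actP :: "'p \<Rightarrow> 'a \<Rightarrow> 'a"
    and lam :: "'n \<Rightarrow> 'p \<Rightarrow> 'p \<times> 'n"
  assumes "game E N actN P actP lam"
  shows "game (dual_es E) P actP N actN (dual_lam N P lam)"
proof -
  note G = assms[unfolded game_def]
  have es: "event_structure E" using G by blast
  have nA: "negative_action N E actN" and pA: "positive_action P E actP" using G by blast+
  have gaN: "group_action N E actN" using nA unfolding negative_action_def by blast
  have gaP: "group_action P E actP" using pA unfolding positive_action_def by blast
  have gN: "group N" using gaN unfolding group_action_def by blast
  have gP: "group P" using gaP unfolding group_action_def by blast
  interpret GN: group N by (rule gN)
  interpret GP: group P by (rule gP)
  have car: "\<And>\<alpha> \<beta>. \<alpha> \<in> carrier N \<Longrightarrow> \<beta> \<in> carrier P \<Longrightarrow> fst (lam \<alpha> \<beta>) \<in> carrier P \<and> snd (lam \<alpha> \<beta>) \<in> carrier N"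
    using G by (metis mem_Times_iff)
  have l1: "\<And>\<beta>. \<beta> \<in> carrier P \<Longrightarrow> lam \<one>\<^bsub>N\<^esub> \<beta> = (\<beta>, \<one>\<^bsub>N\<^esub>)" using G by blast
  have l2: "\<And>\<alpha>. \<alpha> \<in> carrier N \<Longrightarrow> lam \<alpha> \<one>\<^bsub>P\<^esub> = (\<one>\<^bsub>P\<^esub>, \<alpha>)" using G by blast
  have l3: "\<And>\<alpha> \<alpha>' \<beta>. \<alpha> \<in> carrier N \<Longrightarrow> \<alpha>' \<in> carrier N \<Longrightarrow> \<beta> \<in> carrier P \<Longrightarrow>
        lam (\<alpha> \<otimes>\<^bsub>N\<^esub> \<alpha>') \<beta> =
          (fst (lam \<alpha> (fst (lam \<alpha>' \<beta>))),
           snd (lam \<alpha> (fst (lam \<alpha>' \<beta>))) \<otimes>\<^bsub>N\<^esub> snd (lam \<alpha>' \<beta>))" using G by blast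
  have l4: "\<And>\<alpha> \<beta> \<beta>'. \<alpha> \<in> carrier N \<Longrightarrow> \<beta> \<in> carrier P \<Longrightarrow> \<beta>' \<in> carrier P \<Longrightarrow>
        lam \<alpha> (\<beta> \<otimes>\<^bsub>P\<^esub> \<beta>') =
          (fst (lam \<alpha> \<beta>) \<otimes>\<^bsub>P\<^esub> fst (lam (snd (lam \<alpha> \<beta>)) \<beta>'),
           snd (lam (snd (lam \<alpha> \<beta>)) \<beta>'))" using G by blast
  have l5: "\<And>\<alpha> \<beta> a. \<alpha> \<in> carrier N \<Longrightarrow> \<beta> \<in> carrier P \<Longrightarrow> a \<in> ev E \<Longrightarrow>
        actN \<alpha> (actP \<beta> a) = actP (fst (lam \<alpha> \<beta>)) (actN (snd (lam \<alpha> \<beta>)) a)" using G by blast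
  let ?d = "dual_lam N P lam"
  have dd: "\<And>\<beta> \<alpha>. ?d \<beta> \<alpha> = (inv\<^bsub>N\<^esub> (snd (lam (inv\<^bsub>N\<^esub> \<alpha>) (inv\<^bsub>P\<^esub> \<beta>))), inv\<^bsub>P\<^esub> (fst (lam (inv\<^bsub>N\<^esub> \<alpha>) (inv\<^bsub>P\<^esub> \<beta>))))"
    unfolding dual_lam_def Let_def by simp
  have c1: "\<forall>\<beta>\<in>carrier P. \<forall>\<alpha>\<in>carrier N. ?d \<beta> \<alpha> \<in> carrier N \<times> carrier P"
    using car gN gP by (simp add: dd)
  have c2: "\<forall>\<alpha>\<in>carrier N. ?d \<one>\<^bsub>P\<^esub> \<alpha> = (\<alpha>, \<one>\<^bsub>P\<^esub>)"
    using l2 gN gP by (simp add: dd)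
  have c3: "\<forall>\<beta>\<in>carrier P. ?d \<beta> \<one>\<^bsub>N\<^esub> = (\<one>\<^bsub>N\<^esub>, \<beta>)"
    using l1 gN gP by (simp add: dd)
  have c4: "\<forall>\<beta>\<in>carrier P. \<forall>\<beta>'\<in>carrier P. \<forall>\<alpha>\<in>carrier N.
        ?d (\<beta> \<otimes>\<^bsub>P\<^esub> \<beta>') \<alpha> =
          (fst (?d \<beta> (fst (?d \<beta>' \<alpha>))),
           snd (?d \<beta> (fst (?d \<beta>' \<alpha>))) \<otimes>\<^bsub>P\<^esub> snd (?d \<beta>' \<alpha>))"
  proof (intro ballI)
    fix \<beta> \<beta>' \<alpha> assume b: "\<beta> \<in> carrier P" and b': "\<beta>' \<in> carrier P" and a: "\<alpha> \<in> carrier N"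
    define r where "r = lam (inv\<^bsub>N\<^esub> \<alpha>) (inv\<^bsub>P\<^esub> \<beta>')"
    have rc: "fst r \<in> carrier P" "snd r \<in> carrier N" using car a b' gN gP r_def by auto
    define s where "s = lam (snd r) (inv\<^bsub>P\<^esub> \<beta>)"
    have sc: "fst s \<in> carrier P" "snd s \<in> carrier N" using car rc b gP s_def by auto
    have "?d (\<beta> \<otimes>\<^bsub>P\<^esub> \<beta>') \<alpha> = (inv\<^bsub>N\<^esub> (snd s), inv\<^bsub>P\<^esub> (fst r \<otimes>\<^bsub>P\<^esub> fst s))"
      using l4[of "inv\<^bsub>N\<^esub> \<alpha>" "inv\<^bsub>P\<^esub> \<beta>'" "inv\<^bsub>P\<^esub> \<beta>"] a b b' gN gP
      by (simp add: dd group.inv_mult_group r_def s_def)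
    also have "\<dots> = (fst (?d \<beta> (fst (?d \<beta>' \<alpha>))),
           snd (?d \<beta> (fst (?d \<beta>' \<alpha>))) \<otimes>\<^bsub>P\<^esub> snd (?d \<beta>' \<alpha>))"
      using rc sc gN gP by (simp add: dd group.inv_mult_group r_def[symmetric] s_def[symmetric])
    finally show "?d (\<beta> \<otimes>\<^bsub>P\<^esub> \<beta>') \<alpha> =
          (fst (?d \<beta> (fst (?d \<beta>' \<alpha>))),
           snd (?d \<beta> (fst (?d \<beta>' \<alpha>))) \<otimes>\<^bsub>P\<^esub> snd (?d \<beta>' \<alpha>))" .
  qed
  have c5: "\<forall>\<beta>\<in>carrier P. \<forall>\<alpha>\<in>carrier N. \<forall>\<alpha>'\<in>carrier N.
        ?d \<beta> (\<alpha> \<otimes>\<^bsub>N\<^esub> \<alpha>') =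
          (fst (?d \<beta> \<alpha>) \<otimes>\<^bsub>N\<^esub> fst (?d (snd (?d \<beta> \<alpha>)) \<alpha>'),
           snd (?d (snd (?d \<beta> \<alpha>)) \<alpha>'))"
  proof (intro ballI)
    fix \<beta> \<alpha> \<alpha>' assume b: "\<beta> \<in> carrier P" and a: "\<alpha> \<in> carrier N" and a': "\<alpha>' \<in> carrier N"
    define r where "r = lam (inv\<^bsub>N\<^esub> \<alpha>) (inv\<^bsub>P\<^esub> \<beta>)"
    have rc: "fst r \<in> carrier P" "snd r \<in> carrier N" using car a b gN gP r_def by auto
    define s where "s = lam (inv\<^bsub>N\<^esub> \<alpha>') (fst r)"
    have sc: "fst s \<in> carrier P" "snd s \<in> carrier N" using car rc a' gN s_def by auto
    have "?d \<beta> (\<alpha> \<otimes>\<^bsub>N\<^esub> \<alpha>') = (inv\<^bsub>N\<^esub> (snd s \<otimes>\<^bsub>N\<^esub> snd r), inv\<^bsub>P\<^esub> (fst s))"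
      using l3[of "inv\<^bsub>N\<^esub> \<alpha>'" "inv\<^bsub>N\<^esub> \<alpha>" "inv\<^bsub>P\<^esub> \<beta>"] a a' b gN gP
      by (simp add: dd group.inv_mult_group r_def s_def)
    also have "\<dots> = (fst (?d \<beta> \<alpha>) \<otimes>\<^bsub>N\<^esub> fst (?d (snd (?d \<beta> \<alpha>)) \<alpha>'),
           snd (?d (snd (?d \<beta> \<alpha>)) \<alpha>'))"
      using rc sc gN gP by (simp add: dd group.inv_mult_group r_def[symmetric] s_def[symmetric])
    finally show "?d \<beta> (\<alpha> \<otimes>\<^bsub>N\<^esub> \<alpha>') =
          (fst (?d \<beta> \<alpha>) \<otimes>\<^bsub>N\<^esub> fst (?d (snd (?d \<beta> \<alpha>)) \<alpha>'),
           snd (?d (snd (?d \<beta> \<alpha>)) \<alpha>'))" .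
  qed
  have c6: "\<forall>\<beta>\<in>carrier P. \<forall>\<alpha>\<in>carrier N. \<forall>a\<in>ev (dual_es E).
        actP \<beta> (actN \<alpha> a) = actN (fst (?d \<beta> \<alpha>)) (actP (snd (?d \<beta> \<alpha>)) a)"
  proof (intro ballI)
    fix \<beta> \<alpha> a assume b: "\<beta> \<in> carrier P" and al: "\<alpha> \<in> carrier N" and a0: "a \<in> ev (dual_es E)"
    have a: "a \<in> ev E" using a0 by simp
    define r where "r = lam (inv\<^bsub>N\<^esub> \<alpha>) (inv\<^bsub>P\<^esub> \<beta>)"
    have rc: "fst r \<in> carrier P" "snd r \<in> carrier N" using car al b r_def by auto
    define c where "c = actN (inv\<^bsub>N\<^esub> (snd r)) (actP (inv\<^bsub>P\<^esub> (fst r)) a)"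
    have cE: "c \<in> ev E" unfolding c_def using ga_in[OF gaN] ga_in[OF gaP] rc a by simp
    have "actP (fst r) (actN (snd r) c) = a"
      unfolding c_def using ga_cancel[OF gaN] ga_cancel[OF gaP] ga_in[OF gaP] rc a by simp
    hence "actN (inv\<^bsub>N\<^esub> \<alpha>) (actP (inv\<^bsub>P\<^esub> \<beta>) c) = a"
      using l5[of "inv\<^bsub>N\<^esub> \<alpha>" "inv\<^bsub>P\<^esub> \<beta>" c] al b cE r_def by simp
    hence "actP \<beta> (actN \<alpha> a) = actP \<beta> (actN \<alpha> (actN (inv\<^bsub>N\<^esub> \<alpha>) (actP (inv\<^bsub>P\<^esub> \<beta>) c)))" by (simp only: sym)
    also have "\<dots> = c"
      using ga_cancel[OF gaN] ga_cancel[OF gaP] ga_in[OF gaP] al b cE by simp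
    finally show "actP \<beta> (actN \<alpha> a) = actN (fst (?d \<beta> \<alpha>)) (actP (snd (?d \<beta> \<alpha>)) a)"
      by (simp add: dd r_def[symmetric] c_def)
  qed
  have e1: "event_structure (dual_es E)" using es unfolding event_structure_def dual_fields(1,2,3) .
  have e2: "negative_action P (dual_es E) actP" using pA
    unfolding negative_action_def positive_action_def dual_ga dual_neg .
  have e3: "positive_action N (dual_es E) actN" using nA
    unfolding negative_action_def positive_action_def dual_ga dual_pos .
  show ?thesis unfolding game_def
    using e1 e2 e3 c1 c2 c3 c4 c5 c6 by (intro conjI)
qed

end
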